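(* $\widetilde{\mathbb{K}}_{sm}$ is a Gelfand ring: for all $a,b\in\widetilde{\mathbb{K}}_{sm}$ with $a+b=1$ there exist $r,s\in\widetilde{\mathbb{K}}_{sm}$ such that $(1+ar)(1+bs)=0$.
   Context: Let $I=(0,1]$ and $\mathbb{K}\in\{\mathbb{R},\mathbb{C}\}$. $\mathcal{E}_{M,sm}$ is the set of nets $(r_\varepsilon)_{\varepsilon\in I}\in\mathbb{K}^I$ with $\varepsilon\mapsto r_\varepsilon$ smooth on $I$ and $|r_\varepsilon|=O(\varepsilon^{-N})$ as $\varepsilon\to0$ for some $N\in\mathbb{N}$; $\mathcal{N}_{sm}$ is the set of smooth nets with $|r_\varepsilon|=O(\varepsilon^m)$ for all $m\in\mathbb{N}$; $\widetilde{\mathbb{K}}_{sm}=\mathcal{E}_{M,sm}/\mathcal{N}_{sm}$. *)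

theory Defs
  imports "HOL-Analysis.Analysis"
begin

abbreviation Iset :: "real set" where "Iset \<equiv> {0<..1}"

definition smooth_on_I :: "(real \<Rightarrow> 'a::real_normed_vector) \<Rightarrow> bool" where
  "smooth_on_I r \<longleftrightarrow> (\<exists>D :: nat \<Rightarrow> real \<Rightarrow> 'a.
      (\<forall>x\<in>Iset. D 0 x = r x) \<and>
      (\<forall>k. \<forall>x\<in>Iset. (D k has_vector_derivative D (Suc k) x) (at x within Iset)))"

definition E_M_sm :: "(real \<Rightarrow> 'a::real_normed_vector) set" where
  "E_M_sm = {r. smooth_on_I r \<and>
      (\<exists>N::nat. \<exists>C \<epsilon>0. \<epsilon>0 > 0 \<and> (\<forall>\<epsilon>. 0 < \<epsilon> \<and> \<epsilon> \<le> \<epsilon>0 \<and> \<epsilon> \<le> 1 \<longrightarrow> norm (r \<epsilon>) \<le> C / \<epsilon> ^ N))}"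

definition N_sm :: "(real \<Rightarrow> 'a::real_normed_vector) set" where
  "N_sm = {r. smooth_on_I r \<and>
      (\<forall>m::nat. \<exists>C \<epsilon>0. \<epsilon>0 > 0 \<and> (\<forall>\<epsilon>. 0 < \<epsilon> \<and> \<epsilon> \<le> \<epsilon>0 \<and> \<epsilon> \<le> 1 \<longrightarrow> norm (r \<epsilon>) \<le> C * \<epsilon> ^ m))}"

end

theory Submission
  imports Defs "HOL-Computational_Algebra.Polynomial"
begin


definition smoothS :: "real set \<Rightarrow> (real \<Rightarrow> 'a::real_normed_vector) \<Rightarrow> bool" where
  "smoothS S r \<longleftrightarrow> (\<exists>D :: nat \<Rightarrow> real \<Rightarrow> 'a.
      (\<forall>x\<in>S. D 0 x = r x) \<and>
      (\<forall>k. \<forall>x\<in>S. (D k has_vector_derivative D (Suc k) x) (at x within S)))"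

lemma smooth_on_I_eq: "smooth_on_I r = smoothS Iset r"
  by (simp add: smooth_on_I_def smoothS_def)

lemma smoothS_set:
  assumes "f \<in> F"
    and step: "\<And>h. h \<in> F \<Longrightarrow> \<exists>h'\<in>F. \<forall>x\<in>S. (h has_vector_derivative h' x) (at x within S)"
  shows "smoothS S f"
proof -
  define nx where "nx h = (SOME h'. h' \<in> F \<and> (\<forall>x\<in>S. (h has_vector_derivative h' x) (at x within S)))" for h
  have nx: "nx h \<in> F \<and> (\<forall>x\<in>S. (h has_vector_derivative nx h x) (at x within S))" if "h \<in> F" for h
  proof -
    from step[OF that] obtain h' where "h' \<in> F \<and> (\<forall>x\<in>S. (h has_vector_derivative h' x) (at x within S))" by blast
    then show ?thesis unfolding nx_def
      by (rule someI[where P="\<lambda>h'. h' \<in> F \<and> (\<forall>x\<in>S. (h has_vector_derivative h' x) (at x within S))"])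
  qed
  define D where "D k = (nx ^^ k) f" for k
  have DF: "D k \<in> F" for k
    by (induct k) (auto simp: D_def assms(1) nx)
  show ?thesis unfolding smoothS_def
    by (rule exI[of _ D]) (auto simp: D_def nx DF[unfolded D_def])
qed

lemma smoothS_cong:
  assumes "smoothS S f" "\<And>x. x \<in> S \<Longrightarrow> f x = g x"
  shows "smoothS S g"
  using assms unfolding smoothS_def by auto

lemma smoothS_subset:
  assumes "smoothS S f" "T \<subseteq> S"
  shows "smoothS T f"
proof -
  obtain D where D: "\<forall>x\<in>S. D 0 x = f x" "\<forall>k. \<forall>x\<in>S. (D k has_vector_derivative D (Suc k) x) (at x within S)"
    using assms(1) unfolding smoothS_def by blast
  show ?thesis unfolding smoothS_def
  proof (rule exI[of _ D], intro conjI allI ballI)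
    fix x assume "x \<in> T" then show "D 0 x = f x" using D(1) assms(2) by blast
  next
    fix k x assume "x \<in> T"
    then have "(D k has_vector_derivative D (Suc k) x) (at x within S)" using D(2) assms(2) by blast
    then show "(D k has_vector_derivative D (Suc k) x) (at x within T)"
      using assms(2) by (rule has_vector_derivative_within_subset)
  qed
qed

lemma smoothS_shift:
  assumes "\<forall>x\<in>S. D 0 x = f x" "\<forall>k. \<forall>x\<in>S. (D k has_vector_derivative D (Suc k) x) (at x within S)"
  shows "smoothS S (D 1)"
  unfolding smoothS_def
  by (rule exI[of _ "\<lambda>k. D (Suc k)"]) (use assms in auto)

inductive_set alg :: "(real \<Rightarrow> 'a::real_normed_field) set \<Rightarrow> (real \<Rightarrow> 'a) set" for G where
  base: "g \<in> G \<Longrightarrow> g \<in> alg G"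
| const: "(\<lambda>x. c) \<in> alg G"
| add: "f \<in> alg G \<Longrightarrow> g \<in> alg G \<Longrightarrow> (\<lambda>x. f x + g x) \<in> alg G"
| mult: "f \<in> alg G \<Longrightarrow> g \<in> alg G \<Longrightarrow> (\<lambda>x. f x * g x) \<in> alg G"

lemma alg_deriv:
  assumes G: "\<And>g. g \<in> G \<Longrightarrow> \<exists>g'\<in>alg G. \<forall>x\<in>S. (g has_vector_derivative g' x) (at x within S)"
    and "h \<in> alg G"
  shows "\<exists>h'\<in>alg G. \<forall>x\<in>S. (h has_vector_derivative h' x) (at x within S)"
  using assms(2)
proof induct
  case (base g) then show ?case using G by blast
next
  case (const c) then show ?case
    by (intro bexI[of _ "\<lambda>x. 0"]) (auto intro: alg.const)
next
  case (add f g)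
  then obtain f' g' where "f' \<in> alg G" "g' \<in> alg G"
    "\<forall>x\<in>S. (f has_vector_derivative f' x) (at x within S)"
    "\<forall>x\<in>S. (g has_vector_derivative g' x) (at x within S)" by blast
  then show ?case
    by (intro bexI[of _ "\<lambda>x. f' x + g' x"]) (auto intro: alg.add has_vector_derivative_add)
next
  case (mult f g)
  then obtain f' g' where "f' \<in> alg G" "g' \<in> alg G"
    "\<forall>x\<in>S. (f has_vector_derivative f' x) (at x within S)"
    "\<forall>x\<in>S. (g has_vector_derivative g' x) (at x within S)" by blast
  then show ?case
    by (intro bexI[of _ "\<lambda>x. f x * g' x + f' x * g x"])
      (auto intro!: alg.add alg.mult mult has_vector_derivative_mult)
qed

lemma alg_smooth:
  assumes "\<And>g. g \<in> G \<Longrightarrow> \<exists>g'\<in>alg G. \<forall>x\<in>S. (g has_vector_derivative g' x) (at x within S)"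
    and "h \<in> alg G"
  shows "smoothS S h"
  using assms(2) by (rule smoothS_set) (rule alg_deriv[OF assms(1)])

lemma smoothS_D:
  assumes "smoothS S f"
  obtains D where "\<forall>x\<in>S. D 0 x = f x" "\<forall>k. \<forall>x\<in>S. (D k has_vector_derivative D (Suc k) x) (at x within S)"
  using assms unfolding smoothS_def by blast

lemma range_D_ok:
  assumes "\<forall>k. \<forall>x\<in>S. (D k has_vector_derivative D (Suc k) x) (at x within S)" "range D \<subseteq> G"
    and "g \<in> range D"
  shows "\<exists>g'\<in>alg G. \<forall>x\<in>S. (g has_vector_derivative g' x) (at x within S)"
proof -
  obtain k where "g = D k" using assms(3) by blast
  then show ?thesis using assms(1,2)
    by (intro bexI[of _ "D (Suc k)"]) (auto intro!: alg.base)
qed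

lemma smoothS_const: "smoothS S (\<lambda>x. c :: 'a::real_normed_field)"
  by (rule alg_smooth[of "{}"]) (auto intro: alg.const)

lemma smoothS_add:
  fixes f g :: "real \<Rightarrow> 'a::real_normed_field"
  assumes "smoothS S f" "smoothS S g"
  shows "smoothS S (\<lambda>x. f x + g x)"
proof -
  obtain D where D: "\<forall>x\<in>S. D 0 x = f x" "\<forall>k. \<forall>x\<in>S. (D k has_vector_derivative D (Suc k) x) (at x within S)"
    using assms(1) by (rule smoothS_D)
  obtain E where E: "\<forall>x\<in>S. E 0 x = g x" "\<forall>k. \<forall>x\<in>S. (E k has_vector_derivative E (Suc k) x) (at x within S)"
    using assms(2) by (rule smoothS_D)
  have "smoothS S (\<lambda>x. D 0 x + E 0 x)"
  proof (rule alg_smooth[of "range D \<union> range E"])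
    fix g assume "g \<in> range D \<union> range E"
    then show "\<exists>g'\<in>alg (range D \<union> range E). \<forall>x\<in>S. (g has_vector_derivative g' x) (at x within S)"
      using range_D_ok[OF D(2), of "range D \<union> range E"] range_D_ok[OF E(2), of "range D \<union> range E"] by blast
  next
    show "(\<lambda>x. D 0 x + E 0 x) \<in> alg (range D \<union> range E)"
      by (intro alg.add alg.base) auto
  qed
  then show ?thesis by (rule smoothS_cong) (use D(1) E(1) in simp)
qed

lemma smoothS_mult:
  fixes f g :: "real \<Rightarrow> 'a::real_normed_field"
  assumes "smoothS S f" "smoothS S g"
  shows "smoothS S (\<lambda>x. f x * g x)"
proof -
  obtain D where D: "\<forall>x\<in>S. D 0 x = f x" "\<forall>k. \<forall>x\<in>S. (D k has_vector_derivative D (Suc k) x) (at x within S)"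
    using assms(1) by (rule smoothS_D)
  obtain E where E: "\<forall>x\<in>S. E 0 x = g x" "\<forall>k. \<forall>x\<in>S. (E k has_vector_derivative E (Suc k) x) (at x within S)"
    using assms(2) by (rule smoothS_D)
  have "smoothS S (\<lambda>x. D 0 x * E 0 x)"
  proof (rule alg_smooth[of "range D \<union> range E"])
    fix g assume "g \<in> range D \<union> range E"
    then show "\<exists>g'\<in>alg (range D \<union> range E). \<forall>x\<in>S. (g has_vector_derivative g' x) (at x within S)"
      using range_D_ok[OF D(2), of "range D \<union> range E"] range_D_ok[OF E(2), of "range D \<union> range E"] by blast
  next
    show "(\<lambda>x. D 0 x * E 0 x) \<in> alg (range D \<union> range E)"
      by (intro alg.mult alg.base) auto
  qed
  then show ?thesis by (rule smoothS_cong) (use D(1) E(1) in simp)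
qed

lemma vd_inverse:
  fixes f :: "real \<Rightarrow> 'a::real_normed_field"
  assumes "(f has_vector_derivative f') (at x within S)" "f x \<noteq> 0"
  shows "((\<lambda>x. inverse (f x)) has_vector_derivative (- (inverse (f x) * f' * inverse (f x)))) (at x within S)"
  using has_derivative_compose[OF assms(1)[unfolded has_vector_derivative_def] has_derivative_inverse'[OF assms(2)]]
  unfolding has_vector_derivative_def
  by (simp add: scaleR_conv_of_real mult_ac)

lemma smoothS_inverse:
  fixes f :: "real \<Rightarrow> 'a::real_normed_field"
  assumes "smoothS S f" "\<And>x. x \<in> S \<Longrightarrow> f x \<noteq> 0"
  shows "smoothS S (\<lambda>x. inverse (f x))"
proof -
  obtain D where D: "\<forall>x\<in>S. D 0 x = f x" "\<forall>k. \<forall>x\<in>S. (D k has_vector_derivative D (Suc k) x) (at x within S)"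
    using assms(1) by (rule smoothS_D)
  let ?G = "range D \<union> {\<lambda>x. inverse (D 0 x)}"
  have "smoothS S (\<lambda>x. inverse (D 0 x))"
  proof (rule alg_smooth[of ?G])
    fix g assume "g \<in> ?G"
    then consider "g \<in> range D" | "g = (\<lambda>x. inverse (D 0 x))" by blast
    then show "\<exists>g'\<in>alg ?G. \<forall>x\<in>S. (g has_vector_derivative g' x) (at x within S)"
    proof cases
      case 1 then show ?thesis using range_D_ok[OF D(2), of ?G] by blast
    next
      case 2
      show ?thesis
      proof (intro bexI[of _ "\<lambda>x. (-1) * (inverse (D 0 x) * (D 1 x * inverse (D 0 x)))"] ballI)
        fix x assume "x \<in> S"
        then show "(g has_vector_derivative (-1) * (inverse (D 0 x) * (D 1 x * inverse (D 0 x)))) (at x within S)"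
        proof -
          have n: "D 0 x \<noteq> 0" using assms(2) D(1) \<open>x \<in> S\<close> by simp
          have "(D 0 has_vector_derivative D 1 x) (at x within S)" using D(2) \<open>x \<in> S\<close> by simp
          from vd_inverse[OF this n] show ?thesis using 2 by (simp add: mult.assoc)
        qed
      qed (intro alg.mult alg.const alg.base; auto)
    qed
  qed (intro alg.base; auto)
  then show ?thesis by (rule smoothS_cong) (use D(1) in simp)
qed

lemma smoothS_of_real:
  assumes "smoothS S (f :: real \<Rightarrow> real)"
  shows "smoothS S (\<lambda>x. of_real (f x) :: 'a::real_normed_field)"
proof -
  obtain D where D: "\<forall>x\<in>S. D 0 x = f x" "\<forall>k. \<forall>x\<in>S. (D k has_vector_derivative D (Suc k) x) (at x within S)"
    using assms(1) by (rule smoothS_D)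
  show ?thesis unfolding smoothS_def
  proof (rule exI[of _ "\<lambda>k x. of_real (D k x)"], intro conjI allI ballI)
    fix x assume "x \<in> S" then show "of_real (D 0 x) = (of_real (f x) :: 'a)" using D(1) by simp
  next
    fix k x assume "x \<in> S"
    then have "(D k has_real_derivative D (Suc k) x) (at x within S)"
      using D(2) by (simp add: has_real_derivative_iff_has_vector_derivative)
    then show "((\<lambda>x. of_real (D k x) :: 'a) has_vector_derivative of_real (D (Suc k) x)) (at x within S)"
      by (rule has_vector_derivative_of_real)
  qed
qed

lemma smoothS_affine:
  fixes \<sigma> :: "real \<Rightarrow> 'a::real_normed_vector"
  assumes "smoothS UNIV \<sigma>"
  shows "smoothS S (\<lambda>x. \<sigma> (c * x + d))"
proof -
  obtain D where D: "\<forall>x\<in>UNIV. D 0 x = \<sigma> x" "\<forall>k. \<forall>x\<in>UNIV. (D k has_vector_derivative D (Suc k) x) (at x within UNIV)"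
    using assms(1) by (rule smoothS_D)
  show ?thesis unfolding smoothS_def
  proof (rule exI[of _ "\<lambda>k x. c ^ k *\<^sub>R D k (c * x + d)"], rule conjI)
    show "\<forall>x\<in>S. c ^ 0 *\<^sub>R D 0 (c * x + d) = \<sigma> (c * x + d)" using D(1) by simp
  next
    show "\<forall>k. \<forall>x\<in>S. ((\<lambda>x. c ^ k *\<^sub>R D k (c * x + d)) has_vector_derivative c ^ Suc k *\<^sub>R D (Suc k) (c * x + d)) (at x within S)"
    proof (intro allI ballI)
    fix k x assume "x \<in> S"
    have a: "((\<lambda>x. c * x + d) has_vector_derivative c) (at x within S)"
      by (auto intro!: derivative_eq_intros simp: has_real_derivative_iff_has_vector_derivative[symmetric])
    have b: "(D k has_vector_derivative D (Suc k) (c * x + d)) (at (c * x + d) within (\<lambda>x. c * x + d) ` S)"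
      using D(2) has_vector_derivative_within_subset by blast
    have "((D k \<circ> (\<lambda>x. c * x + d)) has_vector_derivative c *\<^sub>R D (Suc k) (c * x + d)) (at x within S)"
      by (rule vector_diff_chain_within[OF a b])
    then have h: "((\<lambda>x. D k (c * x + d)) has_vector_derivative c *\<^sub>R D (Suc k) (c * x + d)) (at x within S)"
      by (simp add: o_def)
    then show "((\<lambda>x. c ^ k *\<^sub>R D k (c * x + d)) has_vector_derivative c ^ Suc k *\<^sub>R D (Suc k) (c * x + d)) (at x within S)"
    proof -
      have e: "c ^ Suc k *\<^sub>R D (Suc k) (c * x + d) = c ^ k *\<^sub>R (c *\<^sub>R D (Suc k) (c * x + d))"
        by (metis power_Suc2 scaleR_scaleR)
      show ?thesis unfolding e by (rule bounded_linear.has_vector_derivative[OF bounded_linear_scaleR_right[of "c^k"] h])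
    qed
  qed
  qed
qed


lemma smoothS_local:
  fixes f :: "real \<Rightarrow> 'a::real_normed_vector"
  assumes nb: "\<And>x. x \<in> S \<Longrightarrow> at x within S \<noteq> bot"
    and loc: "\<And>x. x \<in> S \<Longrightarrow> \<exists>U. open U \<and> x \<in> U \<and> smoothS (U \<inter> S) f"
  shows "smoothS S f"
proof -
  define F where "F = {h :: real \<Rightarrow> 'a. \<forall>x\<in>S. \<exists>U. open U \<and> x \<in> U \<and> smoothS (U \<inter> S) h}"
  have key: "(h has_vector_derivative D 1 y) (at y within S)"
    if "open U" "y \<in> U" "y \<in> S" "\<forall>x\<in>U\<inter>S. D 0 x = h x"
      "\<forall>k. \<forall>x\<in>U\<inter>S. (D k has_vector_derivative D (Suc k) x) (at x within U\<inter>S)"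
    for U and D :: "nat \<Rightarrow> real \<Rightarrow> 'a" and h y
  proof -
    have e: "at y within (U \<inter> S) = at y within S"
      by (rule at_within_nhd[of y U]) (use that(1,2) in auto)
    have "(D 0 has_vector_derivative D 1 y) (at y within U \<inter> S)" using that(2,3,5) by simp
    then have "(h has_vector_derivative D 1 y) (at y within U \<inter> S)"
      by (rule has_vector_derivative_weaken[where T = "U\<inter>S"]) (use that(2,3,4) in auto)
    then show ?thesis using e by simp
  qed
  show ?thesis
  proof (rule smoothS_set[of f F])
    show "f \<in> F" unfolding F_def using loc by blast
  next
    fix h assume "h \<in> F"
    let ?h' = "\<lambda>x. vector_derivative h (at x within S)"
    have *: "\<exists>U. open U \<and> x \<in> U \<and> smoothS (U \<inter> S) ?h' \<and> (h has_vector_derivative ?h' x) (at x within S)"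
      if "x \<in> S" for x
    proof -
      have "\<forall>x\<in>S. \<exists>U. open U \<and> x \<in> U \<and> smoothS (U \<inter> S) h" using \<open>h\<in>F\<close> by (simp add: F_def)
      then have "\<exists>U. open U \<and> x \<in> U \<and> smoothS (U \<inter> S) h" using that by (rule bspec)
      then obtain U where U: "open U" "x \<in> U" "smoothS (U \<inter> S) h" by (elim exE conjE)
      obtain D where D: "\<forall>x\<in>U\<inter>S. D 0 x = h x"
          "\<forall>k. \<forall>x\<in>U\<inter>S. (D k has_vector_derivative D (Suc k) x) (at x within U\<inter>S)"
        using U(3) by (rule smoothS_D)
      have kk: "(h has_vector_derivative D 1 y) (at y within S)" if "y \<in> U \<inter> S" for y
      proof -
        have "y \<in> U" "y \<in> S" using that by auto
        then show ?thesis by (rule key[OF U(1) _ _ D(1) D(2)])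
      qed
      have eq: "?h' y = D 1 y" if "y \<in> U \<inter> S" for y
      proof -
        have "y \<in> S" using that by auto
        then have "at y within S \<noteq> bot" by (rule nb)
        then show ?thesis by (rule vector_derivative_within[OF _ kk[OF that]])
      qed
      have "smoothS (U \<inter> S) (D 1)" by (rule smoothS_shift[OF D])
      then have sm: "smoothS (U \<inter> S) ?h'" by (rule smoothS_cong) (rule eq[symmetric])
      have xUS: "x \<in> U \<inter> S" using U(2) that by simp
      have dx: "(h has_vector_derivative ?h' x) (at x within S)" unfolding eq[OF xUS] by (rule kk[OF xUS])
      show ?thesis using U(1) U(2) sm dx by blast
    qed
    show "\<exists>h'\<in>F. \<forall>x\<in>S. (h has_vector_derivative h' x) (at x within S)"
    proof (rule bexI[of _ ?h'])
      show "\<forall>x\<in>S. (h has_vector_derivative ?h' x) (at x within S)" using * by blast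
      show "?h' \<in> F" unfolding F_def using * by blast
    qed
  qed
qed

lemma nb_I: "x \<in> Iset \<Longrightarrow> at x within Iset \<noteq> bot"
proof -
  assume x: "x \<in> Iset"
  have "x islimpt Iset"
  proof (rule islimpt_approachable[THEN iffD2], intro allI impI)
    fix e :: real assume "0 < e"
    show "\<exists>x'\<in>Iset. x' \<noteq> x \<and> dist x' x < e"
    proof (rule bexI[of _ "x - min e x / 2"])
      have "0 < min e x" using x \<open>0<e\<close> by auto
      moreover have "min e x \<le> e" "min e x \<le> x" by auto
      ultimately show "x - min e x / 2 \<noteq> x \<and> dist (x - min e x / 2) x < e"
        unfolding dist_real_def by auto
      have "0 < x - min e x / 2" "x - min e x / 2 \<le> 1"
        using \<open>0 < min e x\<close> \<open>min e x \<le> x\<close> x by auto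
      then show "x - min e x / 2 \<in> Iset" by simp
    qed
  qed
  then show ?thesis by (simp add: trivial_limit_within)
qed



lemma poly_exp_lim: "((\<lambda>t. poly q t * exp (- t)) \<longlongrightarrow> (0::real)) at_top"
proof -
  have "((\<lambda>t. \<Sum>i\<le>degree q. coeff q i * (t ^ i / exp t)) \<longlongrightarrow> (\<Sum>i\<le>degree q. coeff q i * 0)) at_top"
    by (intro tendsto_sum tendsto_mult tendsto_const tendsto_power_div_exp_0)
  moreover have "(\<lambda>t. \<Sum>i\<le>degree q. coeff q i * (t ^ i / exp t)) = (\<lambda>t. poly q t * exp (- t))"
    by (rule ext) (simp add: poly_altdef sum_distrib_right exp_minus divide_inverse mult.assoc)
  ultimately show ?thesis by simp
qed

lemma poly_exp_lim0: "((\<lambda>h. poly p (inverse h) * exp (- inverse h) / h) \<longlongrightarrow> (0::real)) (at_right 0)"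
proof -
  have "((\<lambda>t. poly (pCons 0 p) t * exp (- t)) \<longlongrightarrow> (0::real)) at_top" by (rule poly_exp_lim)
  then have "((\<lambda>t. poly p (inverse (inverse t)) * exp (- inverse (inverse t)) / inverse t) \<longlongrightarrow> (0::real)) at_top"
    by (simp add: divide_inverse mult_ac)
  then show ?thesis by (simp add: filterlim_at_right_to_top)
qed

definition bfun :: "real \<Rightarrow> real" where "bfun x = (if x > 0 then exp (- inverse x) else 0)"

fun Pk :: "nat \<Rightarrow> real poly" where
  "Pk 0 = 1"
| "Pk (Suc k) = [:0,0,1:] * (Pk k - pderiv (Pk k))"

definition bD :: "nat \<Rightarrow> real \<Rightarrow> real" where
  "bD k x = (if x > 0 then poly (Pk k) (inverse x) * exp (- inverse x) else 0)"

lemma bD_deriv_pos: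
  assumes "x > 0"
  shows "(bD k has_real_derivative bD (Suc k) x) (at x)"
proof -
  have "((\<lambda>y. poly (Pk k) (inverse y) * exp (- inverse y)) has_real_derivative
     (poly (pderiv (Pk k)) (inverse x) * (- inverse (x^2)) * exp (- inverse x)
       + poly (Pk k) (inverse x) * (exp (- inverse x) * inverse (x^2)))) (at x)"
    using assms
    by (auto intro!: derivative_eq_intros DERIV_chain2[OF poly_DERIV] simp: power2_eq_square)
  moreover have "poly (pderiv (Pk k)) (inverse x) * (- inverse (x^2)) * exp (- inverse x)
       + poly (Pk k) (inverse x) * (exp (- inverse x) * inverse (x^2)) = bD (Suc k) x"
    using assms by (simp add: bD_def algebra_simps power2_eq_square power_inverse)
  ultimately have "((\<lambda>y. poly (Pk k) (inverse y) * exp (- inverse y)) has_real_derivative bD (Suc k) x) (at x)"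
    by simp
  then show ?thesis
    by (rule has_field_derivative_transform_within_open[where S="{0<..}"]) (use assms in \<open>auto simp: bD_def\<close>)
qed

lemma bD_deriv_neg:
  assumes "x < 0"
  shows "(bD k has_real_derivative bD (Suc k) x) (at x)"
proof -
  have "((\<lambda>y. 0) has_real_derivative 0) (at x)" by simp
  then have "(bD k has_real_derivative 0) (at x)"
    by (rule has_field_derivative_transform_within_open[where S="{..<0}"]) (use assms in \<open>auto simp: bD_def\<close>)
  then show ?thesis using assms by (simp add: bD_def)
qed

lemma bD_deriv_0: "(bD k has_real_derivative bD (Suc k) 0) (at 0)"
proof -
  have r: "((\<lambda>h. (bD k (0 + h) - bD k 0) / h) \<longlongrightarrow> 0) (at_right 0)"
  proof (rule Lim_transform_eventually[OF poly_exp_lim0[of "Pk k"]])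
    show "\<forall>\<^sub>F h in at_right 0. poly (Pk k) (inverse h) * exp (- inverse h) / h = (bD k (0 + h) - bD k 0) / h"
      by (rule eventually_mono[OF eventually_at_right_less]) (simp add: bD_def)
  qed
  have l: "((\<lambda>h. (bD k (0 + h) - bD k 0) / h) \<longlongrightarrow> 0) (at_left 0)"
  proof (rule Lim_transform_eventually[OF tendsto_const])
    show "\<forall>\<^sub>F h in at_left 0. (0::real) = (bD k (0 + h) - bD k 0) / h"
    proof -
      have "\<forall>\<^sub>F h in at_left (0::real). h \<in> {-1<..<0}" by (rule eventually_at_left_real) simp
      then show ?thesis by (rule eventually_mono) (simp add: bD_def)
    qed
  qed
  have "((\<lambda>h. (bD k (0 + h) - bD k 0) / h) \<longlongrightarrow> 0) (at 0)"
    using l r by (simp add: filterlim_at_split)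
  then show ?thesis by (simp add: DERIV_def bD_def)
qed

lemma bD_deriv: "(bD k has_real_derivative bD (Suc k) x) (at x)"
  using bD_deriv_0 bD_deriv_pos bD_deriv_neg by (cases x "0::real" rule: linorder_cases) auto

lemma smooth_bfun: "smoothS UNIV bfun"
  unfolding smoothS_def
proof (rule exI[of _ bD], intro conjI allI ballI)
  fix x show "bD 0 x = bfun x" by (simp add: bD_def bfun_def)
next
  fix k x show "(bD k has_vector_derivative bD (Suc k) x) (at x within UNIV)"
    using bD_deriv[unfolded has_real_derivative_iff_has_vector_derivative] by simp
qed



definition sg :: "real \<Rightarrow> real" where
  "sg t = bfun (t - 1/3) / (bfun (t - 1/3) + bfun (2/3 - t))"

lemma bfun_nonneg: "0 \<le> bfun x" by (simp add: bfun_def)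
lemma bfun_pos: "x > 0 \<Longrightarrow> bfun x > 0" by (simp add: bfun_def)
lemma bfun_zero: "x \<le> 0 \<Longrightarrow> bfun x = 0" by (simp add: bfun_def)

lemma sg_den_pos: "bfun (t - 1/3) + bfun (2/3 - t) > 0"
proof (cases "t > 1/3")
  case True then show ?thesis using bfun_pos[of "t - 1/3"] bfun_nonneg[of "2/3 - t"] by simp
next
  case False then show ?thesis using bfun_pos[of "2/3 - t"] bfun_nonneg[of "t - 1/3"] by simp
qed

lemma sg_0: "t \<le> 1/3 \<Longrightarrow> sg t = 0" by (simp add: sg_def bfun_zero)
lemma sg_1: "t \<ge> 2/3 \<Longrightarrow> sg t = 1"
  using sg_den_pos[of t] by (simp add: sg_def bfun_zero)
lemma sg_range: "0 \<le> sg t \<and> sg t \<le> 1"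
  using sg_den_pos[of t] bfun_nonneg[of "t - 1/3"] bfun_nonneg[of "2/3 - t"]
  by (simp add: sg_def divide_le_eq_1)

lemma smooth_sg: "smoothS UNIV sg"
proof -
  have a: "smoothS UNIV (\<lambda>t. bfun (1 * t + (-1/3)))" by (rule smoothS_affine[OF smooth_bfun, of UNIV 1 "-1/3"])
  have b: "smoothS UNIV (\<lambda>t. bfun ((-1) * t + 2/3))" by (rule smoothS_affine[OF smooth_bfun, of UNIV "-1" "2/3"])
  have a': "smoothS UNIV (\<lambda>t. bfun (t - 1/3))" by (rule smoothS_cong[OF a]) simp
  have b': "smoothS UNIV (\<lambda>t. bfun (2/3 - t))" by (rule smoothS_cong[OF b]) simp
  have d: "smoothS UNIV (\<lambda>t. bfun (t - 1/3) + bfun (2/3 - t))" by (rule smoothS_add[OF a' b'])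
  have "bfun (t - 1/3) + bfun (2/3 - t) \<noteq> 0" for t using sg_den_pos[of t] by linarith
  then have e: "smoothS UNIV (\<lambda>t. inverse (bfun (t - 1/3) + bfun (2/3 - t)))" by (rule smoothS_inverse[OF d])
  have "smoothS UNIV (\<lambda>t. bfun (t - 1/3) * inverse (bfun (t - 1/3) + bfun (2/3 - t)))"
    by (rule smoothS_mult[OF a' e])
  then show ?thesis by (rule smoothS_cong) (simp only: sg_def divide_inverse)
qed

lemma dec_le:
  fixes xs :: "nat \<Rightarrow> real"
  assumes "\<And>i. xs (Suc i) < xs i" "j \<le> i"
  shows "xs i \<le> xs j"
  using assms(2)
proof (induct i)
  case 0 then show ?case by simp
next
  case (Suc i)
  then show ?case using assms(1)[of i] by (cases "j = Suc i") (auto simp: le_Suc_eq)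
qed

lemma grid_exists:
  fixes g :: "real \<Rightarrow> real"
  assumes cont: "continuous_on Iset g" and eta: "\<eta> > 0"
  shows "\<exists>xs::nat\<Rightarrow>real. xs 0 = 1 \<and> (\<forall>i. 0 < xs (Suc i) \<and> xs (Suc i) < xs i) \<and>
     (\<forall>x\<in>Iset. \<exists>i. xs (Suc i) < x) \<and>
     (\<forall>i y z. xs (Suc i) \<le> y \<longrightarrow> y \<le> xs i \<longrightarrow> xs (Suc i) \<le> z \<longrightarrow> z \<le> xs i \<longrightarrow> \<bar>g y - g z\<bar> < \<eta>)"
proof -
  have uc: "\<exists>d>0. \<forall>y\<in>{(1/2::real)^k..1}. \<forall>z\<in>{(1/2::real)^k..1}. dist y z < d \<longrightarrow> dist (g y) (g z) < \<eta>" for k :: nat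
  proof -
    have "(0::real) < (1/2)^k" by simp
    then have "{(1/2::real)^k..1} \<subseteq> Iset"
      by (meson atLeastAtMost_iff greaterThanAtMost_iff less_le_trans subsetI)
    then have "continuous_on {(1/2::real)^k..1} g" using cont continuous_on_subset by blast
    then have "uniformly_continuous_on {(1/2::real)^k..1} g"
      by (rule compact_uniformly_continuous) simp
    then show ?thesis unfolding uniformly_continuous_on_def using eta by blast
  qed
  have "\<forall>k. \<exists>d. d > 0 \<and> (\<forall>y\<in>{(1/2::real)^k..1}. \<forall>z\<in>{(1/2::real)^k..1}. dist y z < d \<longrightarrow> dist (g y) (g z) < \<eta>)"
    using uc by blast
  then obtain dd where ddc: "\<forall>k. dd k > 0 \<and> (\<forall>y\<in>{(1/2::real)^k..1}. \<forall>z\<in>{(1/2::real)^k..1}. dist y z < dd k \<longrightarrow> dist (g y) (g z) < \<eta>)"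
    by (rule exE[OF choice])
  have dd: "\<And>k. dd k > 0"
    "\<And>k y z. y\<in>{(1/2::real)^k..1} \<Longrightarrow> z\<in>{(1/2::real)^k..1} \<Longrightarrow> dist y z < dd k \<Longrightarrow> dist (g y) (g z) < \<eta>"
    using ddc by blast+
  define lv where "lv x = (LEAST k::nat. (1/2::real)^k \<le> x/2)" for x :: real
  have lv_ex: "\<exists>k::nat. (1/2::real)^k \<le> x/2" if "x > 0" for x :: real
  proof -
    have h1: "0 < x/2" using that by simp
    have h2: "(1/2::real) < 1" by simp
    obtain n where "(1/2::real)^n < x/2" using real_arch_pow_inv[OF h1 h2] by blast
    then show ?thesis by (auto intro: less_imp_le)
  qed
  have lv_ok: "(1/2::real)^(lv x) \<le> x/2" if "x > 0" for x
    unfolding lv_def by (rule LeastI_ex[OF lv_ex[OF that]])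
  have lv_mono: "lv x' \<le> lv x" if "0 < x" "x \<le> x'" for x x'
    unfolding lv_def[of x'] by (rule Least_le) (use lv_ok[OF that(1)] that in auto)
  define nx where "nx x = max (x/2) (x - dd (lv x)/2)" for x
  have nx_pos: "0 < nx x" "nx x < x" "x/2 \<le> nx x" if "x > 0" for x
    using that dd(1)[of "lv x"] by (auto simp: nx_def)
  define xs where "xs i = (nx ^^ i) 1" for i
  have xs_Suc: "xs (Suc i) = nx (xs i)" for i by (simp add: xs_def)
  have xs_pos: "0 < xs i" for i by (induct i) (auto simp: xs_def nx_pos)
  have xs_dec: "xs (Suc i) < xs i" for i using nx_pos(2)[OF xs_pos[of i]] xs_Suc by simp
  have xs0: "xs 0 = 1" by (simp add: xs_def)
  have xs_le1: "xs i \<le> 1" for i using dec_le[where xs=xs and j=0 and i=i] xs_dec xs0 by simp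
  have osc: "\<bar>g y - g z\<bar> < \<eta>" if "xs (Suc i) \<le> y" "y \<le> xs i" "xs (Suc i) \<le> z" "z \<le> xs i" for i y z
  proof -
    let ?x = "xs i"
    have lo: "(1/2)^(lv ?x) \<le> xs (Suc i)" using lv_ok[OF xs_pos[of i]] nx_pos(3)[OF xs_pos[of i]] xs_Suc by simp
    have "xs (Suc i) = max (?x/2) (?x - dd (lv ?x)/2)" using xs_Suc[of i] by (simp add: nx_def)
    then have "?x - dd (lv ?x)/2 \<le> xs (Suc i)" by simp
    then have st: "?x - xs (Suc i) \<le> dd (lv ?x) / 2" by linarith
    have "y \<in> {(1/2)^(lv ?x)..1}" "z \<in> {(1/2)^(lv ?x)..1}" using that lo xs_le1[of i] by auto
    moreover have "dist y z < dd (lv ?x)" using that st dd(1)[of "lv ?x"] by (auto simp: dist_real_def)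
    ultimately show ?thesis using dd(2) by (simp add: dist_real_def)
  qed
  have cover: "\<exists>i. xs (Suc i) < x" if x: "x \<in> Iset" for x
  proof (rule ccontr)
    assume "\<not> ?thesis"
    then have ge: "x \<le> xs i" for i using x xs0 by (cases i) (auto simp: not_less)
    define K where "K = lv x"
    define m where "m = Min (dd ` {..K})"
    have m_pos: "m > 0" unfolding m_def using dd(1) by (subst Min_gr_iff) auto
    have m_le: "m \<le> dd (lv (xs i))" for i
    proof -
      have "lv (xs i) \<le> K" unfolding K_def using lv_mono[of x "xs i"] x ge[of i] by simp
      then show ?thesis unfolding m_def by (intro Min_le) auto
    qed
    define c where "c = min (x/2) (m/2)"
    have c_pos: "c > 0" using x m_pos by (simp add: c_def)
    have step: "xs (Suc i) \<le> xs i - c" for i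
    proof -
      have "xs (Suc i) = max (xs i / 2) (xs i - dd (lv (xs i)) / 2)" using xs_Suc by (simp add: nx_def)
      then show ?thesis using ge[of i] m_le[of i] by (auto simp: c_def)
    qed
    have "xs i \<le> 1 - real i * c" for i
    proof (induct i)
      case 0 then show ?case using xs0 by simp
    next
      case (Suc i) then show ?case using step[of i] by (simp add: algebra_simps)
    qed
    moreover obtain n where "1 < real n * c" using reals_Archimedean3[OF c_pos] by blast
    ultimately show False using xs_pos[of n] by (smt (verit))
  qed
  show ?thesis
  proof (rule exI[of _ xs], intro conjI allI impI ballI)
    show "xs 0 = 1" by (rule xs0)
  next
    fix i show "0 < xs (Suc i)" by (rule xs_pos)
  next
    fix i show "xs (Suc i) < xs i" by (rule xs_dec)
  next
    fix x assume "x \<in> Iset" then show "\<exists>i. xs (Suc i) < x" by (rule cover)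
  next
    fix i y z assume "xs (Suc i) \<le> y" "y \<le> xs i" "xs (Suc i) \<le> z" "z \<le> xs i"
    then show "\<bar>g y - g z\<bar> < \<eta>" by (rule osc)
  qed
qed



lemma conv01:
  fixes a b s :: real
  assumes "a = 0 \<or> a = 1" "b = 0 \<or> b = 1" "0 \<le> s" "s \<le> 1"
  shows "0 \<le> b + (a - b) * s \<and> b + (a - b) * s \<le> 1"
  using assms by auto

lemma cutoff_exists:
  fixes g :: "real \<Rightarrow> real"
  assumes cont: "continuous_on Iset g" and ab: "aa < bb"
  shows "\<exists>\<phi>::real\<Rightarrow>real. smoothS Iset \<phi> \<and> (\<forall>x\<in>Iset. 0 \<le> \<phi> x \<and> \<phi> x \<le> 1) \<and>
           (\<forall>x\<in>Iset. bb \<le> g x \<longrightarrow> \<phi> x = 1) \<and> (\<forall>x\<in>Iset. g x \<le> aa \<longrightarrow> \<phi> x = 0)"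
proof -
  define \<eta> where "\<eta> = (bb - aa)/2"
  have eta: "\<eta> > 0" using ab by (simp add: \<eta>_def)
  from grid_exists[OF cont eta] obtain xs where H: "xs 0 = 1 \<and> (\<forall>i. 0 < xs (Suc i) \<and> xs (Suc i) < xs i) \<and>
     (\<forall>x\<in>Iset. \<exists>i. xs (Suc i) < x) \<and>
     (\<forall>i y z. xs (Suc i) \<le> y \<longrightarrow> y \<le> xs i \<longrightarrow> xs (Suc i) \<le> z \<longrightarrow> z \<le> xs i \<longrightarrow> \<bar>g y - g z\<bar> < \<eta>)"
    by (rule exE)
  have xs0: "xs 0 = 1" using H by blast
  have xdec: "xs (Suc i) < xs i" for i using H by blast
  have xpos: "0 < xs (Suc i)" for i using H by blast
  have cover: "\<exists>i. xs (Suc i) < x" if "x \<in> Iset" for x using H that by blast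
  have osc: "\<bar>g y - g z\<bar> < \<eta>" if "xs (Suc i) \<le> y" "y \<le> xs i" "xs (Suc i) \<le> z" "z \<le> xs i" for i y z
    using H that by blast
  have xle: "xs i \<le> xs j" if "j \<le> i" for i j using dec_le[where xs=xs, OF xdec that] .
  define idx where "idx x = (LEAST i. xs (Suc i) < x)" for x
  have idx1: "xs (Suc (idx x)) < x" if "x \<in> Iset" for x
    unfolding idx_def by (rule LeastI_ex[OF cover[OF that]])
  have idx2: "x \<le> xs (idx x)" if "x \<in> Iset" for x
  proof (cases "idx x")
    case 0 then show ?thesis using that xs0 by simp
  next
    case (Suc j)
    have "j < (LEAST i. xs (Suc i) < x)" using Suc by (simp add: idx_def)
    then have "\<not> xs (Suc j) < x" by (rule not_less_Least)
    then show ?thesis using Suc by simp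
  qed
  have idx_eq: "idx x = i" if "xs (Suc i) < x" "x \<le> xs i" for x i
    unfolding idx_def
  proof (rule Least_equality)
    show "xs (Suc i) < x" by (rule that(1))
  next
    fix j assume j: "xs (Suc j) < x"
    show "i \<le> j"
    proof (rule ccontr)
      assume "\<not> i \<le> j"
      then have "Suc j \<le> i" by simp
      then have "xs i \<le> xs (Suc j)" by (rule xle)
      then show False using j that(2) by simp
    qed
  qed
  define m where "m = (aa + bb)/2"
  define v where "v i = (if m \<le> g (xs i) then 1 else (0::real))" for i
  define Phi where "Phi i y = v (Suc i) + (v i - v (Suc i)) * sg ((y - xs (Suc i)) / (xs i - xs (Suc i)))" for i y
  define \<phi> where "\<phi> y = Phi (idx y) y" for y
  have v01: "v i = 0 \<or> v i = 1" for i by (simp add: v_def)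
  have cell: "xs (Suc (idx x)) \<le> x" "x \<le> xs (idx x)" "xs (Suc (idx x)) \<le> xs (idx x)" if "x \<in> Iset" for x
    using idx1[OF that] idx2[OF that] by simp_all
  have range: "0 \<le> \<phi> x \<and> \<phi> x \<le> 1" if "x \<in> Iset" for x
    unfolding \<phi>_def Phi_def by (rule conv01[OF v01 v01 conjunct1[OF sg_range] conjunct2[OF sg_range]])
  have val1: "\<phi> x = 1" if x: "x \<in> Iset" and gx: "bb \<le> g x" for x
  proof -
    let ?i = "idx x"
    have "\<bar>g x - g (xs ?i)\<bar> < \<eta>" by (rule osc[OF cell(1,2)[OF x] cell(3)[OF x] order_refl])
    then have "g x - g (xs ?i) < \<eta>" by (simp add: abs_less_iff)
    then have "m \<le> g (xs ?i)" using gx unfolding m_def \<eta>_def by argo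
    then have "v ?i = 1" by (simp add: v_def)
    moreover have "\<bar>g x - g (xs (Suc ?i))\<bar> < \<eta>" by (rule osc[OF cell(1,2)[OF x] order_refl cell(3)[OF x]])
    then have "g x - g (xs (Suc ?i)) < \<eta>" by (simp add: abs_less_iff)
    then have "m \<le> g (xs (Suc ?i))" using gx unfolding m_def \<eta>_def by argo
    then have "v (Suc ?i) = 1" by (simp add: v_def)
    ultimately show ?thesis by (simp add: \<phi>_def Phi_def)
  qed
  have val0: "\<phi> x = 0" if x: "x \<in> Iset" and gx: "g x \<le> aa" for x
  proof -
    let ?i = "idx x"
    have "\<bar>g x - g (xs ?i)\<bar> < \<eta>" by (rule osc[OF cell(1,2)[OF x] cell(3)[OF x] order_refl])
    then have "g (xs ?i) - g x < \<eta>" by (simp add: abs_less_iff)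
    then have "\<not> m \<le> g (xs ?i)" using gx unfolding m_def \<eta>_def by argo
    then have "v ?i = 0" by (simp add: v_def)
    moreover have "\<bar>g x - g (xs (Suc ?i))\<bar> < \<eta>" by (rule osc[OF cell(1,2)[OF x] order_refl cell(3)[OF x]])
    then have "g (xs (Suc ?i)) - g x < \<eta>" by (simp add: abs_less_iff)
    then have "\<not> m \<le> g (xs (Suc ?i))" using gx unfolding m_def \<eta>_def by argo
    then have "v (Suc ?i) = 0" by (simp add: v_def)
    ultimately show ?thesis by (simp add: \<phi>_def Phi_def)
  qed
  have Phi_smooth: "smoothS UNIV (Phi i)" for i
  proof -
    define L where "L = xs i - xs (Suc i)"
    have s1: "smoothS UNIV (\<lambda>y. sg ((1/L) * y + (- xs (Suc i) / L)))"
      by (rule smoothS_affine[OF smooth_sg, of UNIV "1/L" "- xs (Suc i) / L"])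
    have s2: "smoothS UNIV (\<lambda>y. v (Suc i) + (v i - v (Suc i)) * sg ((1/L) * y + (- xs (Suc i) / L)))"
      by (rule smoothS_add[OF smoothS_const smoothS_mult[OF smoothS_const s1]])
    show ?thesis
    proof (rule smoothS_cong[OF s2])
      fix y :: real assume "y \<in> UNIV"
      have "(1/L) * y + (- xs (Suc i) / L) = (y - xs (Suc i)) / L" by (simp add: diff_divide_distrib)
      then show "v (Suc i) + (v i - v (Suc i)) * sg ((1/L) * y + (- xs (Suc i) / L)) = Phi i y"
        by (simp add: Phi_def L_def)
    qed
  qed
  have smooth: "smoothS Iset \<phi>"
  proof (rule smoothS_local[OF nb_I])
    fix x assume x: "x \<in> Iset"
    define i where "i = idx x"
    have lo: "xs (Suc i) < x" using idx1[OF x] by (simp add: i_def)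
    have hi: "x \<le> xs i" using idx2[OF x] by (simp add: i_def)
    show "\<exists>U. open U \<and> x \<in> U \<and> smoothS (U \<inter> Iset) \<phi>"
    proof (cases "x < xs i")
      case True
      let ?U = "{xs (Suc i)<..<xs i}"
      have "smoothS (?U \<inter> Iset) (Phi i)" by (rule smoothS_subset[OF Phi_smooth]) simp
      then have "smoothS (?U \<inter> Iset) \<phi>"
      proof (rule smoothS_cong)
        fix y assume "y \<in> ?U \<inter> Iset"
        then have "idx y = i" by (intro idx_eq) auto
        then show "Phi i y = \<phi> y" by (simp add: \<phi>_def)
      qed
      moreover have "x \<in> ?U" using True lo by simp
      ultimately show ?thesis by (intro exI[of _ ?U]) simp
    next
      case False
      then have xeq: "x = xs i" using hi by simp
      define L where "L = xs i - xs (Suc i)"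
      have Lpos: "L > 0" using xdec[of i] by (simp add: L_def)
      define gap where "gap = (if i = 0 then 1 else xs (i - 1) - xs i)"
      have gpos: "gap > 0"
      proof (cases i)
        case 0 then show ?thesis by (simp add: gap_def)
      next
        case (Suc j) then show ?thesis using xdec[of j] by (simp add: gap_def)
      qed
      let ?U = "{xs (Suc i) + 2/3 * L<..<xs i + gap/3}"
      have "xs (Suc i) + 2/3 * L < xs i" using Lpos unfolding L_def by argo
      moreover have "xs i < xs i + gap/3" using gpos by argo
      ultimately have xU: "x \<in> ?U" using xeq by simp
      have const: "\<phi> y = v i" if y: "y \<in> ?U \<inter> Iset" for y
      proof (cases "y \<le> xs i")
        case True
        have y1: "xs (Suc i) + 2/3 * L < y" using y by simp
        then have "xs (Suc i) < y" using Lpos by simp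
        then have "idx y = i" using True by (intro idx_eq)
        moreover have "2/3 \<le> (y - xs (Suc i)) / (xs i - xs (Suc i))"
        proof -
          have "2/3 * (xs i - xs (Suc i)) \<le> y - xs (Suc i)" using y1 unfolding L_def by argo
          then show ?thesis using Lpos by (simp add: pos_le_divide_eq L_def[symmetric])
        qed
        then have "sg ((y - xs (Suc i)) / (xs i - xs (Suc i))) = 1" by (rule sg_1)
        ultimately show ?thesis by (simp add: \<phi>_def Phi_def)
      next
        case False
        have "i \<noteq> 0"
        proof
          assume "i = 0"
          then have "1 < y" using False xs0 by simp
          then show False using y by simp
        qed
        then obtain j where j: "i = Suc j" by (cases i) auto
        have gapj: "gap = xs j - xs (Suc j)" using j by (simp add: gap_def)
        have y2: "y < xs (Suc j) + gap/3" using y j by simp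
        have "y \<le> xs j" using y2 gapj gpos by argo
        moreover have "xs (Suc j) < y" using False j by simp
        ultimately have "idx y = j" by (intro idx_eq)
        moreover have "(y - xs (Suc j)) / (xs j - xs (Suc j)) \<le> 1/3"
        proof -
          have "y - xs (Suc j) \<le> 1/3 * (xs j - xs (Suc j))" using y2 gapj by argo
          then show ?thesis using gpos gapj by (simp add: pos_divide_le_eq)
        qed
        then have "sg ((y - xs (Suc j)) / (xs j - xs (Suc j))) = 0" by (rule sg_0)
        ultimately show ?thesis using j by (simp add: \<phi>_def Phi_def)
      qed
      have "smoothS (?U \<inter> Iset) (\<lambda>y. v i)" by (rule smoothS_const)
      then have "smoothS (?U \<inter> Iset) \<phi>" by (rule smoothS_cong) (rule const[symmetric])
      then show ?thesis using xU by (intro exI[of _ ?U]) simp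
    qed
  qed
  have "smoothS Iset \<phi> \<and> (\<forall>x\<in>Iset. 0 \<le> \<phi> x \<and> \<phi> x \<le> 1) \<and>
           (\<forall>x\<in>Iset. bb \<le> g x \<longrightarrow> \<phi> x = 1) \<and> (\<forall>x\<in>Iset. g x \<le> aa \<longrightarrow> \<phi> x = 0)"
    using smooth range val1 val0 by blast
  then show ?thesis by blast
qed



lemma smooth_cutinv:
  fixes f :: "real \<Rightarrow> 'a::real_normed_field" and \<phi> :: "real \<Rightarrow> real"
  assumes sp: "smoothS Iset \<phi>" and sf: "smoothS Iset f" and cf: "continuous_on Iset f"
    and van: "\<And>x. x \<in> Iset \<Longrightarrow> f x = 0 \<Longrightarrow> \<exists>d>0. \<forall>y\<in>Iset. dist y x < d \<longrightarrow> \<phi> y = 0"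
  shows "smoothS Iset (\<lambda>x. of_real (\<phi> x) * inverse (f x))"
proof (rule smoothS_local[OF nb_I])
  fix x assume x: "x \<in> Iset"
  show "\<exists>U. open U \<and> x \<in> U \<and> smoothS (U \<inter> Iset) (\<lambda>x. of_real (\<phi> x) * inverse (f x))"
  proof (cases "f x = 0")
    case True
    obtain d where d: "d > 0" "\<forall>y\<in>Iset. dist y x < d \<longrightarrow> \<phi> y = 0" using van[OF x True] by blast
    have "smoothS (ball x d \<inter> Iset) (\<lambda>y. 0::'a)" by (rule smoothS_const)
    then have "smoothS (ball x d \<inter> Iset) (\<lambda>x. of_real (\<phi> x) * inverse (f x))"
    proof (rule smoothS_cong)
      fix y assume "y \<in> ball x d \<inter> Iset"
      then have "\<phi> y = 0" using d(2) by (simp add: dist_commute)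
      then show "(0::'a) = of_real (\<phi> y) * inverse (f y)" by simp
    qed
    then show ?thesis using d(1) by (intro exI[of _ "ball x d"]) simp
  next
    case False
    then have "norm (f x) > 0" by simp
    then obtain d where d: "d > 0" "\<forall>y\<in>Iset. dist y x < d \<longrightarrow> dist (f y) (f x) < norm (f x)"
      using cf x unfolding continuous_on_iff by blast
    have nz: "f y \<noteq> 0" if "y \<in> ball x d \<inter> Iset" for y
    proof
      assume "f y = 0"
      moreover have "dist y x < d" "y \<in> Iset" using that by (auto simp: dist_commute)
      then have "dist (f y) (f x) < norm (f x)" using d(2) by blast
      ultimately show False by (simp add: dist_norm)
    qed
    have "smoothS (ball x d \<inter> Iset) (\<lambda>x. of_real (\<phi> x) * inverse (f x))"
    proof (rule smoothS_mult)
      show "smoothS (ball x d \<inter> Iset) (\<lambda>x. of_real (\<phi> x) :: 'a)"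
        by (rule smoothS_subset[OF smoothS_of_real[OF sp]]) simp
      show "smoothS (ball x d \<inter> Iset) (\<lambda>x. inverse (f x))"
        by (rule smoothS_inverse[OF smoothS_subset[OF sf] nz]) simp_all
    qed
    then show ?thesis using d(1) by (intro exI[of _ "ball x d"]) simp
  qed
qed

lemma key_pt:
  fixes A B :: "'a::real_normed_field" and p q :: real
  assumes "0 \<le> p" "p \<le> 1" "0 \<le> q" "q \<le> 1"
    and p1: "4/10 \<le> norm A \<Longrightarrow> p = 1" and p0: "norm A \<le> 3/10 \<Longrightarrow> p = 0"
    and q0: "norm A \<le> 5/10 \<Longrightarrow> q = 0"
  shows "norm ((1 + A * (of_real (- p) * inverse A)) * (1 + B * (of_real (q - 1) * inverse (1 - A))))
           \<le> 2 * norm (A + B - 1)"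
proof (cases "4/10 \<le> norm A")
  case True
  then have "A \<noteq> 0" by auto
  then have "1 + A * (of_real (- p) * inverse A) = (0::'a)" using p1[OF True] by simp
  then show ?thesis by simp
next
  case False
  then have q: "q = 0" using q0 by simp
  have f1: "norm (1 + A * (of_real (- p) * inverse A)) \<le> 1"
  proof (cases "A = 0")
    case True then show ?thesis by simp
  next
    case nz: False
    have "A * (of_real (- p) * inverse A) = (of_real (- p) :: 'a) * (A * inverse A)"
      by (rule mult.left_commute)
    also have "\<dots> = of_real (- p)" using right_inverse[OF nz] by simp
    finally have "A * (of_real (- p) * inverse A) = (of_real (- p) :: 'a)" .
    then have e: "1 + A * (of_real (- p) * inverse A) = (of_real (1 - p) :: 'a)" by simp
    show ?thesis unfolding e norm_of_real using assms(1,2) by simp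
  qed
  have n1: "norm (1 - A) \<ge> 6/10"
  proof -
    have "norm (1::'a) - norm A \<le> norm (1 - A)" by (rule norm_triangle_ineq2)
    then show ?thesis using False by simp
  qed
  then have nz1: "1 - A \<noteq> 0" by auto
  have e2: "1 + B * (of_real (q - 1) * inverse (1 - A)) = (1 - A - B) / (1 - A)"
    using nz1 q by (simp add: field_simps)
  have "1 - A - B = - (A + B - 1)" by (simp add: algebra_simps)
  then have e3: "norm (1 - A - B) = norm (A + B - 1)" by (simp only: norm_minus_cancel)
  have "norm (1 + B * (of_real (q - 1) * inverse (1 - A))) = norm (A + B - 1) / norm (1 - A)"
    unfolding e2 norm_divide e3 ..

  also have "\<dots> \<le> norm (A + B - 1) / (6/10)"
    using n1 by (intro divide_left_mono) auto
  also have "\<dots> \<le> 2 * norm (A + B - 1)" by simp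
  finally have f2: "norm (1 + B * (of_real (q - 1) * inverse (1 - A))) \<le> 2 * norm (A + B - 1)" .
  have "norm ((1 + A * (of_real (- p) * inverse A)) * (1 + B * (of_real (q - 1) * inverse (1 - A))))
     = norm (1 + A * (of_real (- p) * inverse A)) * norm (1 + B * (of_real (q - 1) * inverse (1 - A)))"
    by (rule norm_mult)
  also have "\<dots> \<le> 1 * (2 * norm (A + B - 1))"
    using f1 f2 by (intro mult_mono) auto
  finally show ?thesis by simp
qed



theorem lemma4p5:
  fixes a b :: "real \<Rightarrow> 'a::real_normed_field"
  assumes "a \<in> E_M_sm" and "b \<in> E_M_sm"
    and "(\<lambda>\<epsilon>. a \<epsilon> + b \<epsilon> - 1) \<in> N_sm"
  shows "\<exists>r s. r \<in> E_M_sm \<and> s \<in> E_M_sm \<and>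
           (\<lambda>\<epsilon>. (1 + a \<epsilon> * r \<epsilon>) * (1 + b \<epsilon> * s \<epsilon>)) \<in> N_sm"
proof -
  have sa: "smoothS Iset a" using assms(1) by (simp add: E_M_sm_def smooth_on_I_eq)
  have sb: "smoothS Iset b" using assms(2) by (simp add: E_M_sm_def smooth_on_I_eq)
  have nN: "\<forall>m::nat. \<exists>C \<epsilon>0. \<epsilon>0 > 0 \<and> (\<forall>\<epsilon>. 0 < \<epsilon> \<and> \<epsilon> \<le> \<epsilon>0 \<and> \<epsilon> \<le> 1 \<longrightarrow> norm (a \<epsilon> + b \<epsilon> - 1) \<le> C * \<epsilon> ^ m)"
    using assms(3) by (simp add: N_sm_def)
  obtain D where D: "\<forall>x\<in>Iset. D 0 x = a x" "\<forall>k. \<forall>x\<in>Iset. (D k has_vector_derivative D (Suc k) x) (at x within Iset)"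
    using sa by (rule smoothS_D)
  have "continuous_on Iset (D 0)" by (rule continuous_on_vector_derivative) (use D(2) in blast)
  moreover have "continuous_on Iset (D 0) = continuous_on Iset a"
    by (rule continuous_on_cong) (use D(1) in auto)
  ultimately have ca: "continuous_on Iset a" by simp
  have cg: "continuous_on Iset (\<lambda>x. norm (a x))" by (rule continuous_on_norm[OF ca])
  obtain \<phi>1 :: "real \<Rightarrow> real" where p1: "smoothS Iset \<phi>1" "\<forall>x\<in>Iset. 0 \<le> \<phi>1 x \<and> \<phi>1 x \<le> 1"
    "\<forall>x\<in>Iset. 4/10 \<le> norm (a x) \<longrightarrow> \<phi>1 x = 1" "\<forall>x\<in>Iset. norm (a x) \<le> 3/10 \<longrightarrow> \<phi>1 x = 0"
    using cutoff_exists[OF cg, of "3/10" "4/10"] by auto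
  obtain \<phi>2 :: "real \<Rightarrow> real" where p2: "smoothS Iset \<phi>2" "\<forall>x\<in>Iset. 0 \<le> \<phi>2 x \<and> \<phi>2 x \<le> 1"
    "\<forall>x\<in>Iset. 6/10 \<le> norm (a x) \<longrightarrow> \<phi>2 x = 1" "\<forall>x\<in>Iset. norm (a x) \<le> 5/10 \<longrightarrow> \<phi>2 x = 0"
    using cutoff_exists[OF cg, of "5/10" "6/10"] by auto
  define r where "r = (\<lambda>x. of_real (- \<phi>1 x) * inverse (a x))"
  define s where "s = (\<lambda>x. of_real (\<phi>2 x - 1) * inverse (1 - a x))"
  have gnb: "\<exists>d>0. \<forall>y\<in>Iset. dist y x < d \<longrightarrow> \<bar>norm (a y) - norm (a x)\<bar> < e" if "x \<in> Iset" "e > 0" for x e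
    using cg that unfolding continuous_on_iff dist_real_def by blast
  have sr: "smoothS Iset r"
    unfolding r_def
  proof (rule smooth_cutinv[OF _ sa ca])
    have "smoothS Iset (\<lambda>x. (-1) * \<phi>1 x)" by (rule smoothS_mult[OF smoothS_const p1(1)])
    then show "smoothS Iset (\<lambda>x. - \<phi>1 x)" by (rule smoothS_cong) simp
  next
    fix x assume x: "x \<in> Iset" and a0: "a x = 0"
    obtain d where d: "d > 0" "\<forall>y\<in>Iset. dist y x < d \<longrightarrow> \<bar>norm (a y) - norm (a x)\<bar> < 3/10"
      using gnb[OF x, of "3/10"] by auto
    show "\<exists>d>0. \<forall>y\<in>Iset. dist y x < d \<longrightarrow> - \<phi>1 y = 0"
    proof (intro exI[of _ d] conjI ballI impI)
      fix y assume "y \<in> Iset" "dist y x < d"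
      then have "\<bar>norm (a y) - norm (a x)\<bar> < 3/10" using d(2) by blast
      then have "norm (a y) \<le> 3/10" using a0 by simp
      then show "- \<phi>1 y = 0" using p1(4) \<open>y \<in> Iset\<close> by auto
    qed (use d in simp)
  qed
  have s1a: "smoothS Iset (\<lambda>x. 1 - a x)"
  proof -
    have "smoothS Iset (\<lambda>x. 1 + (-1) * a x)" by (rule smoothS_add[OF smoothS_const smoothS_mult[OF smoothS_const sa]])
    then show ?thesis by (rule smoothS_cong) simp
  qed
  have ss: "smoothS Iset s"
    unfolding s_def
  proof (rule smooth_cutinv[OF _ s1a])
    have "smoothS Iset (\<lambda>x. \<phi>2 x + (-1))" by (rule smoothS_add[OF p2(1) smoothS_const])
    then show "smoothS Iset (\<lambda>x. \<phi>2 x - 1)" by (rule smoothS_cong) simp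
  next
    show "continuous_on Iset (\<lambda>x. 1 - a x)" by (intro continuous_on_diff continuous_on_const ca)
  next
    fix x assume x: "x \<in> Iset" and a1: "1 - a x = 0"
    then have na: "norm (a x) = 1" by simp
    obtain d where d: "d > 0" "\<forall>y\<in>Iset. dist y x < d \<longrightarrow> \<bar>norm (a y) - norm (a x)\<bar> < 4/10"
      using gnb[OF x, of "4/10"] by auto
    show "\<exists>d>0. \<forall>y\<in>Iset. dist y x < d \<longrightarrow> \<phi>2 y - 1 = 0"
    proof (intro exI[of _ d] conjI ballI impI)
      fix y assume "y \<in> Iset" "dist y x < d"
      then have "\<bar>norm (a y) - norm (a x)\<bar> < 4/10" using d(2) by blast
      then have "6/10 \<le> norm (a y)" unfolding na by argo
      then show "\<phi>2 y - 1 = 0" using p2(3) \<open>y \<in> Iset\<close> by auto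
    qed (use d in simp)
  qed
  have rb: "norm (r x) \<le> 4" if x: "x \<in> Iset" for x
  proof (cases "norm (a x) \<le> 3/10")
    case True then show ?thesis using p1(4) x by (simp add: r_def)
  next
    case False
    have e: "norm (r x) = \<bar>\<phi>1 x\<bar> * inverse (norm (a x))" by (simp add: r_def norm_mult norm_inverse)
    have "inverse (norm (a x)) \<le> inverse (3/10)" using False by (intro le_imp_inverse_le) auto
    moreover have "\<bar>\<phi>1 x\<bar> \<le> 1" using p1(2) x by auto
    ultimately have "\<bar>\<phi>1 x\<bar> * inverse (norm (a x)) \<le> 1 * inverse (3/10)"
      by (intro mult_mono) auto
    then show ?thesis unfolding e by simp
  qed
  have sb4: "norm (s x) \<le> 4" if x: "x \<in> Iset" for x
  proof (cases "6/10 \<le> norm (a x)")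
    case True then show ?thesis using p2(3) x by (simp add: s_def)
  next
    case False
    have e: "norm (s x) = \<bar>\<phi>2 x - 1\<bar> * inverse (norm (1 - a x))" by (simp only: s_def norm_mult norm_inverse norm_of_real)
    have "norm (1::'a) - norm (a x) \<le> norm (1 - a x)" by (rule norm_triangle_ineq2)
    then have "4/10 \<le> norm (1 - a x)" using False by simp
    then have "inverse (norm (1 - a x)) \<le> inverse (4/10)" by (intro le_imp_inverse_le) auto
    moreover have "\<bar>\<phi>2 x - 1\<bar> \<le> 1" using p2(2) x by auto
    ultimately have "\<bar>\<phi>2 x - 1\<bar> * inverse (norm (1 - a x)) \<le> 1 * inverse (4/10)"
      by (intro mult_mono) auto
    then show ?thesis unfolding e by simp
  qed
  have "\<exists>N::nat. \<exists>C \<epsilon>0. \<epsilon>0 > 0 \<and> (\<forall>\<epsilon>. 0 < \<epsilon> \<and> \<epsilon> \<le> \<epsilon>0 \<and> \<epsilon> \<le> 1 \<longrightarrow> norm (r \<epsilon>) \<le> C / \<epsilon> ^ N)"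
    by (rule exI[of _ 0], rule exI[of _ 4], rule exI[of _ 1]) (use rb in auto)
  then have rE: "r \<in> E_M_sm" using sr by (simp add: E_M_sm_def smooth_on_I_eq)
  have "\<exists>N::nat. \<exists>C \<epsilon>0. \<epsilon>0 > 0 \<and> (\<forall>\<epsilon>. 0 < \<epsilon> \<and> \<epsilon> \<le> \<epsilon>0 \<and> \<epsilon> \<le> 1 \<longrightarrow> norm (s \<epsilon>) \<le> C / \<epsilon> ^ N)"
    by (rule exI[of _ 0], rule exI[of _ 4], rule exI[of _ 1]) (use sb4 in auto)
  then have sE: "s \<in> E_M_sm" using ss by (simp add: E_M_sm_def smooth_on_I_eq)
  have Pb: "norm ((1 + a x * r x) * (1 + b x * s x)) \<le> 2 * norm (a x + b x - 1)" if x: "x \<in> Iset" for x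
    unfolding r_def s_def
    by (rule key_pt) (use p1 p2 x in auto)
  have sP: "smoothS Iset (\<lambda>\<epsilon>. (1 + a \<epsilon> * r \<epsilon>) * (1 + b \<epsilon> * s \<epsilon>))"
    by (rule smoothS_mult[OF smoothS_add[OF smoothS_const smoothS_mult[OF sa sr]]
          smoothS_add[OF smoothS_const smoothS_mult[OF sb ss]]])
  have PN: "(\<lambda>\<epsilon>. (1 + a \<epsilon> * r \<epsilon>) * (1 + b \<epsilon> * s \<epsilon>)) \<in> N_sm"
    unfolding N_sm_def smooth_on_I_eq
  proof (intro CollectI conjI sP allI)
    fix m :: nat
    obtain C \<epsilon>0 where C: "\<epsilon>0 > 0" "\<forall>\<epsilon>. 0 < \<epsilon> \<and> \<epsilon> \<le> \<epsilon>0 \<and> \<epsilon> \<le> 1 \<longrightarrow> norm (a \<epsilon> + b \<epsilon> - 1) \<le> C * \<epsilon> ^ m"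
      using nN by blast
    show "\<exists>C \<epsilon>0. \<epsilon>0 > 0 \<and> (\<forall>\<epsilon>. 0 < \<epsilon> \<and> \<epsilon> \<le> \<epsilon>0 \<and> \<epsilon> \<le> 1 \<longrightarrow>
            norm ((1 + a \<epsilon> * r \<epsilon>) * (1 + b \<epsilon> * s \<epsilon>)) \<le> C * \<epsilon> ^ m)"
    proof -
      have bd: "norm ((1 + a \<epsilon> * r \<epsilon>) * (1 + b \<epsilon> * s \<epsilon>)) \<le> (2 * C) * \<epsilon> ^ m"
        if h: "0 < \<epsilon> \<and> \<epsilon> \<le> \<epsilon>0 \<and> \<epsilon> \<le> 1" for \<epsilon>
      proof -
        have "\<epsilon> \<in> Iset" using h by simp
        then have "norm ((1 + a \<epsilon> * r \<epsilon>) * (1 + b \<epsilon> * s \<epsilon>)) \<le> 2 * norm (a \<epsilon> + b \<epsilon> - 1)" by (rule Pb)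
        also have "\<dots> \<le> 2 * (C * \<epsilon> ^ m)" using C(2) h by simp
        finally show ?thesis by simp
      qed
      show ?thesis using C(1) bd by blast
    qed
  qed
  show ?thesis using rE sE PN by blast
qed

end
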